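(* Let $\Gamma$ be a finite group and let $\pi$ be a faithful irreducible unitary representation of $\Gamma$ on a finite-dimensional Hilbert space $\mathsf{H}$. Then there exists $\xi\in\mathsf{H}$ such that the matrix coefficient $g\mapsto\langle\xi,\pi(g)\xi\rangle$ separates the points of $\Gamma$. *)

theory Defs
  imports "HOL-Algebra.Group" "Jordan_Normal_Form.Schur_Decomposition"
begin

text \<open>The finite-dimensional complex Hilbert space H is modelled as C^n (vectors of
  dimension n), with inner product given by the library's conjugate scalar product.\<close>

definition unitary_mat :: "nat \<Rightarrow> complex mat \<Rightarrow> bool" where
  "unitary_mat n U \<longleftrightarrow> U \<in> carrier_mat n n \<and>
     mat_adjoint U * U = 1\<^sub>m n \<and> U * mat_adjoint U = 1\<^sub>m n"

definition unitary_rep :: "('g, 'b) monoid_scheme \<Rightarrow> nat \<Rightarrow> ('g \<Rightarrow> complex mat) \<Rightarrow> bool" where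
  "unitary_rep G n \<pi> \<longleftrightarrow>
     (\<forall>g\<in>carrier G. unitary_mat n (\<pi> g)) \<and>
     (\<forall>g\<in>carrier G. \<forall>h\<in>carrier G. \<pi> (g \<otimes>\<^bsub>G\<^esub> h) = \<pi> g * \<pi> h)"

definition invariant_subspace :: "('g, 'b) monoid_scheme \<Rightarrow> nat \<Rightarrow> ('g \<Rightarrow> complex mat) \<Rightarrow> complex vec set \<Rightarrow> bool" where
  "invariant_subspace G n \<pi> W \<longleftrightarrow>
     W \<subseteq> carrier_vec n \<and> 0\<^sub>v n \<in> W \<and>
     (\<forall>v\<in>W. \<forall>w\<in>W. v + w \<in> W) \<and>
     (\<forall>c::complex. \<forall>w\<in>W. c \<cdot>\<^sub>v w \<in> W) \<and>
     (\<forall>g\<in>carrier G. \<forall>w\<in>W. \<pi> g *\<^sub>v w \<in> W)"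

definition irreducible_rep :: "('g, 'b) monoid_scheme \<Rightarrow> nat \<Rightarrow> ('g \<Rightarrow> complex mat) \<Rightarrow> bool" where
  "irreducible_rep G n \<pi> \<longleftrightarrow> n > 0 \<and>
     (\<forall>W. invariant_subspace G n \<pi> W \<longrightarrow> W = {0\<^sub>v n} \<or> W = carrier_vec n)"

definition faithful_rep :: "('g, 'b) monoid_scheme \<Rightarrow> ('g \<Rightarrow> complex mat) \<Rightarrow> bool" where
  "faithful_rep G \<pi> \<longleftrightarrow> inj_on \<pi> (carrier G)"

end

theory Submission imports Defs begin

definition F :: "complex mat \<Rightarrow> complex vec \<Rightarrow> complex vec \<Rightarrow> complex" where
 "F A v w = v \<bullet>c (A *\<^sub>v w)"

lemma F_add1: "A \<in> carrier_mat n n \<Longrightarrow> u \<in> carrier_vec n \<Longrightarrow> v \<in> carrier_vec n \<Longrightarrow> w \<in> carrier_vec n \<Longrightarrow>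
  F A (u + v) w = F A u w + F A v w"
  unfolding F_def by (rule add_scalar_prod_distrib) auto

lemma F_add2: "A \<in> carrier_mat n n \<Longrightarrow> u \<in> carrier_vec n \<Longrightarrow> v \<in> carrier_vec n \<Longrightarrow> w \<in> carrier_vec n \<Longrightarrow>
  F A u (v + w) = F A u v + F A u w"
  unfolding F_def
  by (simp add: mult_add_distrib_mat_vec[of A n n] conjugate_add_vec[of _ n] scalar_prod_add_distrib[of _ n])

lemma F_smult1: "A \<in> carrier_mat n n \<Longrightarrow> u \<in> carrier_vec n \<Longrightarrow> w \<in> carrier_vec n \<Longrightarrow>
  F A (c \<cdot>\<^sub>v u) w = c * F A u w"
  unfolding F_def by (rule smult_scalar_prod_distrib) auto

lemma F_smult2: "A \<in> carrier_mat n n \<Longrightarrow> u \<in> carrier_vec n \<Longrightarrow> w \<in> carrier_vec n \<Longrightarrow>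
  F A u (c \<cdot>\<^sub>v w) = cnj c * F A u w"
  unfolding F_def
  by (simp add: mult_mat_vec[of A n n] conjugate_smult_vec scalar_prod_smult_distrib[of _ n])

lemma conj_minus_vec: "x \<in> carrier_vec n \<Longrightarrow> y \<in> carrier_vec n \<Longrightarrow> conjugate (x - y) = conjugate x - (conjugate y :: complex vec)"
  by (intro eq_vecI) auto

lemma F_minus: "A \<in> carrier_mat n n \<Longrightarrow> B \<in> carrier_mat n n \<Longrightarrow> u \<in> carrier_vec n \<Longrightarrow>
  F (A - B) u u = F A u u - F B u u"
  unfolding F_def
  by (simp add: minus_mult_distrib_mat_vec[of A n n] conj_minus_vec[of _ n] scalar_prod_minus_distrib[of _ n])

lemma F_unit: "A \<in> carrier_mat n n \<Longrightarrow> i < n \<Longrightarrow> j < n \<Longrightarrow> F A (unit_vec n i) (unit_vec n j) = cnj (A $$ (i,j))"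
  unfolding F_def
  by (subst scalar_prod_left_unit[of _ n]) auto

lemma F_expand: assumes "A \<in> carrier_mat n n" "x \<in> carrier_vec n" "y \<in> carrier_vec n"
  shows "F A (x + t \<cdot>\<^sub>v y) (x + t \<cdot>\<^sub>v y) = F A x x + cnj t * F A x y + t * F A y x + t * cnj t * F A y y"
  using assms by (simp add: F_add1[of A n] F_add2[of A n] F_smult1[of A n] F_smult2[of A n] algebra_simps)

lemma polar: assumes A: "A \<in> carrier_mat n n" and nz: "A \<noteq> 0\<^sub>m n n"
  shows "\<exists>y\<in>carrier_vec n. F A y y \<noteq> 0"
proof (rule ccontr)
  assume "\<not> ?thesis"
  hence Z: "\<And>y. y \<in> carrier_vec n \<Longrightarrow> F A y y = 0" by auto
  have "A = 0\<^sub>m n n"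
  proof (rule eq_matI)
    fix i j assume i: "i < dim_row (0\<^sub>m n n :: complex mat)" and j: "j < dim_col (0\<^sub>m n n :: complex mat)"
    hence i: "i < n" and j: "j < n" by auto
    define u where "u = (unit_vec n i :: complex vec)"
    define w where "w = (unit_vec n j :: complex vec)"
    have u: "u \<in> carrier_vec n" and w: "w \<in> carrier_vec n" unfolding u_def w_def by auto
    have e1: "F A (u + 1 \<cdot>\<^sub>v w) (u + 1 \<cdot>\<^sub>v w) = 0" using Z u w by auto
    have e2: "F A (u + \<i> \<cdot>\<^sub>v w) (u + \<i> \<cdot>\<^sub>v w) = 0" using Z u w by auto
    have uu: "F A u u = 0" "F A w w = 0" using Z u w by auto
    from e1 have s1: "F A u w + F A w u = 0" unfolding F_expand[OF A u w] using uu by simp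
    from e2 have s2: "- \<i> * F A u w + \<i> * F A w u = 0" unfolding F_expand[OF A u w] using uu by simp
    from s1 have "F A w u = - F A u w" by (simp add: eq_neg_iff_add_eq_0 add.commute)
    with s2 have "- (2 * \<i>) * F A u w = 0" by (simp add: algebra_simps)
    hence "F A u w = 0" by simp
    hence "cnj (A $$ (i,j)) = 0" using F_unit[OF A i j] unfolding u_def w_def by simp
    thus "A $$ (i, j) = 0\<^sub>m n n $$ (i, j)" using i j by simp
  qed (use A in auto)
  with nz show False by simp
qed

lemma quad_finite: fixes a b c :: complex assumes "a \<noteq> 0 \<or> c \<noteq> 0"
  shows "finite {t::real. a + of_real t * b + (of_real t)^2 * c = 0}"
proof -
  have p: "[:a, b, c:] \<noteq> 0" using assms by auto
  have "{t::real. a + of_real t * b + (of_real t)^2 * c = 0} = of_real -` {z. poly [:a,b,c:] z = 0}"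
    by (auto simp: power2_eq_square algebra_simps)
  also have "finite \<dots>"
    by (rule finite_vimageI) (use poly_roots_finite[OF p] inj_of_real in auto)
  finally show ?thesis .
qed

lemma F_expand_real: assumes "A \<in> carrier_mat n n" "x \<in> carrier_vec n" "y \<in> carrier_vec n"
  shows "F A (x + of_real t \<cdot>\<^sub>v y) (x + of_real t \<cdot>\<^sub>v y) = F A x x + of_real t * (F A x y + F A y x) + (of_real t)^2 * F A y y"
  unfolding F_expand[OF assms] by (simp add: power2_eq_square algebra_simps)

lemma avoid: "finite M \<Longrightarrow> M \<subseteq> carrier_mat n n \<Longrightarrow> 0\<^sub>m n n \<notin> M \<Longrightarrow> \<exists>x\<in>carrier_vec n. \<forall>A\<in>M. F A x x \<noteq> 0"
proof (induction M rule: finite_induct)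
  case empty
  then show ?case by (intro bexI[of _ "0\<^sub>v n"]) auto
next
  case (insert B M)
  then obtain x where x: "x \<in> carrier_vec n" and xM: "\<forall>A\<in>M. F A x x \<noteq> 0" by auto
  have B: "B \<in> carrier_mat n n" "B \<noteq> 0\<^sub>m n n" using insert by auto
  obtain y where y: "y \<in> carrier_vec n" and yB: "F B y y \<noteq> 0" using polar[OF B] by auto
  define T where "T A = {t::real. F A x x + of_real t * (F A x y + F A y x) + (of_real t)^2 * F A y y = 0}" for A
  have fin: "finite (\<Union>A\<in>insert B M. T A)"
  proof (rule finite_UN_I)
    show "finite (insert B M)" using insert by simp
    fix A assume "A \<in> insert B M"
    hence "F A x x \<noteq> 0 \<or> F A y y \<noteq> 0" using xM yB by auto
    thus "finite (T A)" unfolding T_def by (rule quad_finite)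
  qed
  obtain t where t: "t \<notin> (\<Union>A\<in>insert B M. T A)"
    using ex_new_if_finite[OF infinite_UNIV_char_0 fin] by auto
  show ?case
  proof (intro bexI[of _ "x + of_real t \<cdot>\<^sub>v y"] ballI)
    show "x + of_real t \<cdot>\<^sub>v y \<in> carrier_vec n" using x y by simp
    fix A assume A: "A \<in> insert B M"
    hence Ac: "A \<in> carrier_mat n n" using insert by auto
    show "F A (x + of_real t \<cdot>\<^sub>v y) (x + of_real t \<cdot>\<^sub>v y) \<noteq> 0"
      unfolding F_expand_real[OF Ac x y] using t A unfolding T_def by auto
  qed
qed

theorem proposition6p1:
  fixes G :: "('g, 'b) monoid_scheme" and n :: nat and \<pi> :: "'g \<Rightarrow> complex mat"
  assumes "group G" and "finite (carrier G)"
    and "unitary_rep G n \<pi>" and "faithful_rep G \<pi>" and "irreducible_rep G n \<pi>"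
  shows "\<exists>\<xi>\<in>carrier_vec n. inj_on (\<lambda>g. \<xi> \<bullet>c (\<pi> g *\<^sub>v \<xi>)) (carrier G)"
proof -
  let ?S = "carrier G"
  have car: "\<And>g. g \<in> ?S \<Longrightarrow> \<pi> g \<in> carrier_mat n n"
    using assms(3) unfolding unitary_rep_def unitary_mat_def by auto
  have inj: "inj_on \<pi> ?S" using assms(4) unfolding faithful_rep_def .
  define P where "P = {(g,h). g \<in> ?S \<and> h \<in> ?S \<and> g \<noteq> h}"
  define M where "M = (\<lambda>(g,h). \<pi> g - \<pi> h) ` P"
  have "finite P" unfolding P_def
    by (rule finite_subset[of _ "?S \<times> ?S"]) (use assms(2) in auto)
  hence finM: "finite M" unfolding M_def by simp
  have subM: "M \<subseteq> carrier_mat n n"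
  proof
    fix A assume "A \<in> M"
    then obtain g h where "h \<in> ?S" "A = \<pi> g - \<pi> h" unfolding M_def P_def by auto
    thus "A \<in> carrier_mat n n" using minus_carrier_mat[OF car[of h]] by simp
  qed
  have zM: "0\<^sub>m n n \<notin> M"
  proof
    assume "0\<^sub>m n n \<in> M"
    then obtain g h where g: "g \<in> ?S" and h: "h \<in> ?S" and gh: "g \<noteq> h" and e: "\<pi> g - \<pi> h = 0\<^sub>m n n"
      unfolding M_def P_def by auto
    have cg: "dim_row (\<pi> g) = n" "dim_col (\<pi> g) = n" using car[OF g] by auto
    have ch: "dim_row (\<pi> h) = n" "dim_col (\<pi> h) = n" using car[OF h] by auto
    have "\<pi> g = \<pi> h"
    proof (rule eq_matI)
      fix i j assume "i < dim_row (\<pi> h)" "j < dim_col (\<pi> h)"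
      hence ij: "i < n" "j < n" using ch by auto
      have "(\<pi> g - \<pi> h) $$ (i,j) = 0\<^sub>m n n $$ (i,j)" using e by (rule arg_cong)
      also have "\<dots> = 0" using ij by (rule index_zero_mat(1))
      also have "(\<pi> g - \<pi> h) $$ (i,j) = \<pi> g $$ (i, j) - \<pi> h $$ (i, j)"
        using ij ch by (intro index_minus_mat(1)) auto
      finally show "\<pi> g $$ (i, j) = \<pi> h $$ (i, j)" by simp
    next
      show "dim_row (\<pi> g) = dim_row (\<pi> h)" using cg ch by simp
    next
      show "dim_col (\<pi> g) = dim_col (\<pi> h)" using cg ch by simp
    qed
    hence "g = h" using inj g h unfolding inj_on_def by blast
    with gh show False by simp
  qed
  obtain x where x: "x \<in> carrier_vec n" and xM: "\<forall>A\<in>M. F A x x \<noteq> 0"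
    using avoid[OF finM subM zM] by auto
  show ?thesis
  proof (intro bexI[OF _ x] inj_onI)
    fix g h assume g: "g \<in> ?S" and h: "h \<in> ?S" and e: "x \<bullet>c (\<pi> g *\<^sub>v x) = x \<bullet>c (\<pi> h *\<^sub>v x)"
    show "g = h"
    proof (rule ccontr)
      assume gh: "g \<noteq> h"
      have "\<pi> g - \<pi> h \<in> M" unfolding M_def P_def using g h gh by auto
      hence "F (\<pi> g - \<pi> h) x x \<noteq> 0" using xM by auto
      moreover have "F (\<pi> g - \<pi> h) x x = 0"
        using F_minus[OF car[OF g] car[OF h] x] e unfolding F_def by simp
      ultimately show False by simp
    qed
  qed
qed

end
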